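(* Let $L>0$, $\mu\in(-\infty,0]$, $\kappa:=\mu/L$, $N\ge1$, $h_0,\dots,h_{N-1}\in(0,1]$ and $\Delta>0$, and set $p(h,\kappa)=2h-h^2\frac{-\kappa}{1-\kappa}$. Consider the gradient method $x_{i+1}=x_i-\frac{h_i}{L}\nabla f(x_i)$, $i=0,\dots,N-1$. Then: (i) there exist $f\in\mathcal{F}_{\mu,L}(\mathbb{R})$ and $x_0\in\mathbb{R}$ such that $f(x_0)-f(x_N)=\Delta$ and $\min_{0\le i\le N}|f'(x_i)|^2=\frac{2L\Delta}{\sum_{i=0}^{N-1}p(h_i,\kappa)}$; (ii) there exist $f\in\mathcal{F}_{\mu,L}(\mathbb{R})$ with global minimum value $f_*$ and $x_0\in\mathbb{R}$ such that $f(x_0)-f_*=\Delta$ and $\min_{0\le i\le N}|f'(x_i)|^2=\frac{2L\Delta}{1+\sum_{i=0}^{N-1}p(h_i,\kappa)}$. That is, for step sizes in $(0,1]$ the upper bounds $\min_{0\le i\le N}\|\nabla f(x_i)\|^2\le\frac{2L[f(x_0)-f(x_N)]}{\sum_i p(h_i,\kappa)}$ and $\min_{0\le i\le N}\|\nabla f(x_i)\|^2\le\frac{2L[f(x_0)-f_*]}{1+\sum_i p(h_i,\kappa)}$, valid for all $f\in\mathcal{F}_{\mu,L}$, are attained.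
   Context: For $L>0$ and $\mu\le L$, $\mathcal{F}_{\mu,L}(\mathbb{R}^d)$ denotes the class of differentiable functions $f:\mathbb{R}^d\to\mathbb{R}$ such that both $\frac L2\|\cdot\|^2-f$ and $f-\frac{\mu}{2}\|\cdot\|^2$ are convex. *)

theory Defs
  imports "HOL-Analysis.Analysis"
begin

definition smooth_class :: "real \<Rightarrow> real \<Rightarrow> ('a::real_inner \<Rightarrow> real) set" where
  "smooth_class mu L = {f. (\<forall>x. f differentiable (at x))
      \<and> convex_on UNIV (\<lambda>x. L / 2 * (norm x)^2 - f x)
      \<and> convex_on UNIV (\<lambda>x. f x - mu / 2 * (norm x)^2)}"

definition pfun :: "real \<Rightarrow> real \<Rightarrow> real" where
  "pfun h kappa = 2 * h - h^2 * (- kappa) / (1 - kappa)"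

primrec gd_iter :: "(real \<Rightarrow> real) \<Rightarrow> real \<Rightarrow> (nat \<Rightarrow> real) \<Rightarrow> real \<Rightarrow> nat \<Rightarrow> real" where
  "gd_iter f L h x0 0 = x0"
| "gd_iter f L h x0 (Suc i) = gd_iter f L h x0 i - h i / L * deriv f (gd_iter f L h x0 i)"

end

theory Submission imports Defs "HOL-Analysis.Analysis" begin

lemma antideriv:
  fixes D :: "real \<Rightarrow> real"
  assumes cont: "continuous_on UNIV D"
  shows "((\<lambda>u. integral {0..u} D - integral {u..0} D) has_real_derivative D x) (at x)"
proof -
  define a where "a = min 0 x - 1"
  define b where "b = max 0 x + 1"
  have cab: "continuous_on {a..b} D" using cont continuous_on_subset by blast
  have d1: "((\<lambda>u. integral {a..u} D) has_real_derivative D x) (at x within {a..b})"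
    by (rule integral_has_real_derivative[OF cab]) (auto simp: a_def b_def)
  have "x \<in> interior {a..b}" by (auto simp: a_def b_def)
  then have d2: "((\<lambda>u. integral {a..u} D) has_real_derivative D x) (at x)"
    using d1 at_within_interior by metis
  then have d3: "((\<lambda>u. integral {a..u} D - integral {a..0} D) has_real_derivative D x) (at x)"
    by (auto intro!: derivative_eq_intros)
  show ?thesis
  proof (rule has_field_derivative_transform_within_open[OF d3, of "{a<..<b}"])
    show "open {a<..<b}" by simp
    show "x \<in> {a<..<b}" by (auto simp: a_def b_def)
    fix u assume u: "u \<in> {a<..<b}"
    have int: "D integrable_on {a..b}"
      using cab integrable_continuous_real by blast
    show "integral {a..u} D - integral {a..0} D = integral {0..u} D - integral {u..0} D"
    proof (cases "0 \<le> u")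
      case True
      have "integral {a..0} D + integral {0..u} D = integral {a..u} D"
        by (rule Henstock_Kurzweil_Integration.integral_combine) (use True u in \<open>auto simp: a_def b_def intro!: integrable_continuous_real continuous_on_subset[OF cont]\<close>)
      moreover have "integral {u..0} D = 0"
        using True by (cases "u = 0") auto
      ultimately show ?thesis by simp
    next
      case False
      have "integral {a..u} D + integral {u..0} D = integral {a..0} D"
        by (rule Henstock_Kurzweil_Integration.integral_combine) (use False u in \<open>auto simp: a_def b_def intro!: integrable_continuous_real continuous_on_subset[OF cont]\<close>)
      moreover have "integral {0..u} D = 0"
        using False by auto
      ultimately show ?thesis by simp
    qed
  qed
qed


definition Vf :: "real \<Rightarrow> real \<Rightarrow> real \<Rightarrow> real \<Rightarrow> real \<Rightarrow> real \<Rightarrow> real" where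
  "Vf mu L g a b x = max (g + mu*(x-a)) (g + L*(x-b))"

primrec Dk :: "real \<Rightarrow> real \<Rightarrow> real \<Rightarrow> (nat \<Rightarrow> real) \<Rightarrow> real \<Rightarrow> nat \<Rightarrow> real \<Rightarrow> real" where
  "Dk mu L g p e 0 x = min g (max 0 (g + L*(x-e)))"
| "Dk mu L g p e (Suc k) x = min (Dk mu L g p e k x) (Vf mu L g (p (Suc k)) (p k) x)"

definition slope_ok :: "real \<Rightarrow> real \<Rightarrow> (real \<Rightarrow> real) \<Rightarrow> bool" where
  "slope_ok mu L f = (\<forall>x y. x \<le> y \<longrightarrow> mu*(y-x) \<le> f y - f x \<and> f y - f x \<le> L*(y-x))"

lemma slope_ok_min: "slope_ok mu L f1 \<Longrightarrow> slope_ok mu L f2 \<Longrightarrow> slope_ok mu L (\<lambda>x. min (f1 x) (f2 x))"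
  unfolding slope_ok_def
proof (intro allI impI)
  fix x y :: real assume a: "\<forall>x y. x \<le> y \<longrightarrow> mu * (y - x) \<le> f1 y - f1 x \<and> f1 y - f1 x \<le> L * (y - x)"
    "\<forall>x y. x \<le> y \<longrightarrow> mu * (y - x) \<le> f2 y - f2 x \<and> f2 y - f2 x \<le> L * (y - x)" and xy: "x \<le> y"
  have "mu * (y - x) \<le> f1 y - f1 x \<and> f1 y - f1 x \<le> L * (y - x)"
     "mu * (y - x) \<le> f2 y - f2 x \<and> f2 y - f2 x \<le> L * (y - x)" using a xy by auto
  then show "mu * (y - x) \<le> min (f1 y) (f2 y) - min (f1 x) (f2 x) \<and> min (f1 y) (f2 y) - min (f1 x) (f2 x) \<le> L * (y - x)"
    by (auto simp: min_def)
qed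

lemma slope_ok_max: "slope_ok mu L f1 \<Longrightarrow> slope_ok mu L f2 \<Longrightarrow> slope_ok mu L (\<lambda>x. max (f1 x) (f2 x))"
  unfolding slope_ok_def
proof (intro allI impI)
  fix x y :: real assume a: "\<forall>x y. x \<le> y \<longrightarrow> mu * (y - x) \<le> f1 y - f1 x \<and> f1 y - f1 x \<le> L * (y - x)"
    "\<forall>x y. x \<le> y \<longrightarrow> mu * (y - x) \<le> f2 y - f2 x \<and> f2 y - f2 x \<le> L * (y - x)" and xy: "x \<le> y"
  have "mu * (y - x) \<le> f1 y - f1 x \<and> f1 y - f1 x \<le> L * (y - x)"
     "mu * (y - x) \<le> f2 y - f2 x \<and> f2 y - f2 x \<le> L * (y - x)" using a xy by auto
  then show "mu * (y - x) \<le> max (f1 y) (f2 y) - max (f1 x) (f2 x) \<and> max (f1 y) (f2 y) - max (f1 x) (f2 x) \<le> L * (y - x)"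
    by (auto simp: max_def)
qed

lemma slope_ok_line: "mu \<le> s \<Longrightarrow> s \<le> L \<Longrightarrow> slope_ok mu L (\<lambda>x. c + s*(x-t))"
  unfolding slope_ok_def
proof (intro allI impI)
  fix x y :: real assume "mu \<le> s" "s \<le> L" "x \<le> y"
  then have "mu*(y-x) \<le> s*(y-x)" "s*(y-x) \<le> L*(y-x)" by (auto intro: mult_right_mono)
  then show "mu * (y - x) \<le> c + s * (y - t) - (c + s * (x - t)) \<and> c + s * (y - t) - (c + s * (x - t)) \<le> L * (y - x)"
    by (auto simp: algebra_simps)
qed

lemma slope_ok_Dk:
  assumes "mu \<le> 0" "0 \<le> L"
  shows "slope_ok mu L (Dk mu L g p e k)"
proof (induction k)
  case 0
  have "slope_ok mu L (\<lambda>x. min (g + 0*(x-0)) (max (0 + 0*(x-0)) (g + L*(x-e))))"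
    using assms by (intro slope_ok_min slope_ok_max slope_ok_line) auto
  then show ?case by (simp add: fun_eq_iff)
next
  case (Suc k)
  have "slope_ok mu L (\<lambda>x. min (Dk mu L g p e k x) (Vf mu L g (p (Suc k)) (p k) x))"
    unfolding Vf_def using assms Suc
    by (intro slope_ok_min slope_ok_max slope_ok_line) auto
  then show ?case by (simp add: fun_eq_iff)
qed

lemma cont_Dk: "continuous_on UNIV (Dk mu L g p e k)"
proof (induction k)
  case 0
  show ?case by (simp add: continuous_intros)
next
  case (Suc k)
  have "continuous_on UNIV (\<lambda>x. min (Dk mu L g p e k x) (Vf mu L g (p (Suc k)) (p k) x))"
    unfolding Vf_def using Suc by (intro continuous_intros) auto
  then show ?case by simp
qed

lemma Dk_le:
  "Dk mu L g p e k x \<le> g" "Dk mu L g p e k x \<le> max 0 (g + L*(x-e))"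
  "j < k \<Longrightarrow> Dk mu L g p e k x \<le> Vf mu L g (p (Suc j)) (p j) x"
  by (induction k) (auto simp: less_Suc_eq)

lemma Dk_ge:
  "y \<le> g \<Longrightarrow> y \<le> max 0 (g + L*(x-e)) \<Longrightarrow> (\<forall>j<k. y \<le> Vf mu L g (p (Suc j)) (p j) x)
    \<Longrightarrow> y \<le> Dk mu L g p e k x"
  by (induction k) auto


lemma Vf_ge: "mu \<le> 0 \<Longrightarrow> 0 \<le> L \<Longrightarrow> x \<le> a \<or> b \<le> x \<Longrightarrow> g \<le> Vf mu L g a b x"
proof -
  assume a: "mu \<le> 0" "0 \<le> L" "x \<le> a \<or> b \<le> x"
  show ?thesis
  proof (cases "x \<le> a")
    case True
    then have "0 \<le> mu*(x-a)" using a by (intro mult_nonpos_nonpos) auto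
    then show ?thesis unfolding Vf_def by simp
  next
    case False
    then have "0 \<le> L*(x-b)" using a by (intro mult_nonneg_nonneg) auto
    then show ?thesis unfolding Vf_def by simp
  qed
qed

lemma Vf_le: "mu \<le> 0 \<Longrightarrow> 0 \<le> L \<Longrightarrow> a \<le> x \<Longrightarrow> x \<le> b \<Longrightarrow> Vf mu L g a b x \<le> g"
  unfolding Vf_def by (auto simp: mult_nonpos_nonneg mult_nonneg_nonpos)

lemma Vf_nonneg:
  assumes "mu \<le> 0" "0 < L" "0 < g" "0 < hh" "hh \<le> 1" "b - a = hh * g / L"
  shows "0 \<le> Vf mu L g a b x"
proof (rule ccontr)
  assume "\<not> ?thesis"
  then have n1: "g + mu*(x-a) < 0" and n2: "g + L*(x-b) < 0" unfolding Vf_def by auto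
  have "L*(g + mu*(x-a)) \<le> 0" using n1 assms by (simp add: mult_pos_neg less_imp_le)
  moreover have "(-mu)*(g + L*(x-b)) \<le> 0" by (intro mult_nonneg_nonpos) (use n2 assms in auto)
  ultimately have "L*(g + mu*(x-a)) + (-mu)*(g + L*(x-b)) \<le> 0" by linarith
  moreover have "L*(g + mu*(x-a)) + (-mu)*(g + L*(x-b)) = (L - mu)*g + mu*L*(b-a)"
    by (simp add: algebra_simps)
  moreover have "mu*L*(b-a) = mu*hh*g" using assms by simp
  ultimately have "(L - mu + mu*hh)*g \<le> 0" by (simp add: algebra_simps)
  moreover have "L - mu + mu*hh > 0"
  proof -
    have "mu*hh \<ge> mu" using mult_left_mono_neg[of hh 1 mu] assms by simp
    then show ?thesis using assms by linarith
  qed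
  ultimately show False using assms by (simp add: mult_le_0_iff)
qed

lemma alg1: "(q::real) > 0 \<Longrightarrow> (L - q)/2*(L*d/q)^2 - L/2*(-(L-q)*d/q)^2 = L*(L-q)*d^2/(2*q)"
  by (simp add: field_simps power2_eq_square)

lemma alg2: "(L::real) > 0 \<Longrightarrow> L - mu > 0 \<Longrightarrow> g*(hh*g/L) + L*mu*(hh*g/L)^2/(2*(L-mu)) = g^2/(2*L) * (2 * hh - hh^2 * (- (mu/L)) / (1 - mu/L))"
  by (simp add: field_simps power2_eq_square)

lemma area:
  fixes F D :: "real \<Rightarrow> real"
  assumes der: "\<And>x. (F has_real_derivative D x) (at x)" and ab: "a \<le> b"
    and eq: "\<And>x. a \<le> x \<Longrightarrow> x \<le> b \<Longrightarrow> D x = c + s*(x-t)"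
  shows "F b - F a = c*(b-a) + s/2*((b-t)^2 - (a-t)^2)"
proof (cases "a = b")
  case True then show ?thesis by simp
next
  case False
  then have "a < b" using ab by simp
  define G where "G x = F x - c*x - s/2*(x-t)^2" for x
  have dG: "(G has_real_derivative D x - c - s*(x-t)) (at x)" for x
    unfolding G_def by (auto intro!: derivative_eq_intros der simp: power2_eq_square algebra_simps)
  have "G b = G a"
  proof (rule DERIV_isconst_end[OF \<open>a < b\<close>])
    show "continuous_on {a..b} G"
      using dG by (meson DERIV_continuous continuous_at_imp_continuous_on)
    fix x assume "a < x" "x < b"
    then show "DERIV G x :> 0" using dG[of x] eq[of x] by simp
  qed
  then show ?thesis unfolding G_def by (simp add: algebra_simps power2_eq_square)
qed


lemma construction:
  fixes L mu g :: real and N :: nat and h :: "nat \<Rightarrow> real"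
  assumes L: "L > 0" and mu: "mu \<le> 0" and hN: "\<forall>i<N. 0 < h i \<and> h i \<le> 1" and g: "g > 0"
  shows "\<exists>F xstar. F \<in> smooth_class mu L \<and> (\<forall>i\<le>N. deriv F (gd_iter F L h 0 i) = g)
     \<and> F 0 - F (gd_iter F L h 0 N) = g^2/(2*L) * (\<Sum>i<N. pfun (h i) (mu/L))
     \<and> (\<forall>y. F xstar \<le> F y) \<and> F 0 - F xstar = g^2/(2*L) * (1 + (\<Sum>i<N. pfun (h i) (mu/L)))"
proof -
  define p where "p k = - g/L * (\<Sum>j<k. h j)" for k
  define e where "e = p N"
  define D where "D = Dk mu L g p e N"
  define F where "F = (\<lambda>u. integral {0..u} D - integral {u..0} D)"
  have der: "(F has_real_derivative D x) (at x)" for x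
    unfolding F_def D_def by (rule antideriv[OF cont_Dk])
  have slope: "slope_ok mu L D" unfolding D_def by (rule slope_ok_Dk) (use mu L in auto)
  have pS: "p (Suc k) = p k - h k * g / L" for k
    unfolding p_def by (simp add: algebra_simps)
  have p0: "p 0 = 0" unfolding p_def by simp
  have pmono: "k \<le> N \<Longrightarrow> j \<le> k \<Longrightarrow> p k \<le> p j" for j k
  proof (induction k)
    case 0 then show ?case by simp
  next
    case (Suc k)
    show ?case
    proof (cases "j = Suc k")
      case False
      then have "p k \<le> p j" using Suc by simp
      moreover have "h k * g / L \<ge> 0" using hN Suc.prems g L by (simp add: less_imp_le)
      ultimately show ?thesis using pS[of k] by simp
    qed simp
  qed
  have Dle: "D x \<le> g" "D x \<le> max 0 (g + L*(x-e))"
    "j < N \<Longrightarrow> D x \<le> Vf mu L g (p (Suc j)) (p j) x" for x j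
    unfolding D_def by (rule Dk_le)+
  have Dge: "y \<le> g \<Longrightarrow> y \<le> max 0 (g + L*(x-e)) \<Longrightarrow> (\<forall>j<N. y \<le> Vf mu L g (p (Suc j)) (p j) x)
    \<Longrightarrow> y \<le> D x" for x y
    unfolding D_def by (rule Dk_ge)
  have Vge: "j < N \<Longrightarrow> x \<le> p (Suc j) \<or> p j \<le> x \<Longrightarrow> g \<le> Vf mu L g (p (Suc j)) (p j) x" for j x
    using Vf_ge mu L by simp
  have Dp: "D (p i) = g" if "i \<le> N" for i
  proof (rule antisym)
    show "D (p i) \<le> g" by (rule Dle)
    have "p N \<le> p i" using pmono that by simp
    then have "g \<le> max 0 (g + L*(p i - e))" using L unfolding e_def by (simp add: le_max_iff_disj)
    moreover have "\<forall>j<N. g \<le> Vf mu L g (p (Suc j)) (p j) (p i)"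
    proof (intro allI impI)
      fix j assume j: "j < N"
      show "g \<le> Vf mu L g (p (Suc j)) (p j) (p i)"
      proof (cases "j < i")
        case True then show ?thesis using j that pmono[of i "Suc j"] by (intro Vge) auto
      next
        case False then show ?thesis using j that pmono[of j i] by (intro Vge) auto
      qed
    qed
    ultimately show "g \<le> D (p i)" by (intro Dge) auto
  qed
  have DV: "D x = Vf mu L g (p (Suc i)) (p i) x" if i: "i < N" and x: "p (Suc i) \<le> x" "x \<le> p i" for i x
  proof (rule antisym)
    show "D x \<le> Vf mu L g (p (Suc i)) (p i) x" using Dle(3) i by blast
    have Vg: "Vf mu L g (p (Suc i)) (p i) x \<le> g" using Vf_le mu L x by simp
    have "p N \<le> p (Suc i)" using pmono i by simp
    then have "g \<le> max 0 (g + L*(x - e))" using L x unfolding e_def by (simp add: le_max_iff_disj)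
    moreover have "\<forall>j<N. Vf mu L g (p (Suc i)) (p i) x \<le> Vf mu L g (p (Suc j)) (p j) x"
    proof (intro allI impI)
      fix j assume j: "j < N"
      consider "j = i" | "j < i" | "i < j" by linarith
      then show "Vf mu L g (p (Suc i)) (p i) x \<le> Vf mu L g (p (Suc j)) (p j) x"
      proof cases
        case 2 then have "x \<le> p (Suc j)" using i x pmono[of i "Suc j"] by auto
        then show ?thesis using Vg Vge[OF j] by fastforce
      next
        case 3 then have "p j \<le> x" using j x pmono[of j "Suc i"] by auto
        then show ?thesis using Vg Vge[OF j] by fastforce
      qed simp
    qed
    ultimately show "Vf mu L g (p (Suc i)) (p i) x \<le> D x" using Vg by (intro Dge) auto
  qed
  have iter: "i \<le> N \<Longrightarrow> gd_iter F L h 0 i = p i" for i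
  proof (induction i)
    case 0 then show ?case by (simp add: p0)
  next
    case (Suc i)
    then have "gd_iter F L h 0 i = p i" by simp
    moreover have "deriv F (p i) = g" using DERIV_imp_deriv[OF der] Dp Suc.prems by simp
    ultimately show ?case using pS[of i] by simp
  qed
  have dF: "deriv F x = D x" for x using DERIV_imp_deriv[OF der] by simp

  have Lmu: "L - mu > 0" using L mu by linarith
  have step: "F (p i) - F (p (Suc i)) = g^2/(2*L) * pfun (h i) (mu/L)" if i: "i < N" for i
  proof -
    define a where "a = p (Suc i)"
    define b where "b = p i"
    define d where "d = b - a"
    have d: "d = h i * g / L" unfolding d_def a_def b_def using pS[of i] by simp
    have d0: "d \<ge> 0" using d hN i g L by (simp add: less_imp_le)
    define m where "m = (L*b - mu*a)/(L - mu)"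
    have ma: "m - a = L*d/(L-mu)" unfolding m_def d_def using Lmu by (simp add: field_simps)
    have bm: "b - m = -mu*d/(L-mu)" unfolding m_def d_def using Lmu by (simp add: field_simps)
    have "0 \<le> L*d/(L-mu)" using d0 L Lmu by (intro divide_nonneg_pos mult_nonneg_nonneg) auto
    then have am: "a \<le> m" using ma by simp
    have "0 \<le> -mu*d/(L-mu)" using d0 mu Lmu by (intro divide_nonneg_pos mult_nonneg_nonneg) auto
    then have mb: "m \<le> b" using bm by simp
    have Va: "Vf mu L g a b x = g + mu*(x-a)" if "x \<le> m" for x
    proof -
      have "(L - mu)*x \<le> (L-mu)*m" using that Lmu by simp
      also have "\<dots> = L*b - mu*a" unfolding m_def using Lmu by simp
      finally show ?thesis unfolding Vf_def by (simp add: algebra_simps max_def)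
    qed
    have Vb: "Vf mu L g a b x = g + L*(x-b)" if "m \<le> x" for x
    proof -
      have "(L - mu)*x \<ge> (L-mu)*m" using that Lmu by simp
      moreover have "(L-mu)*m = L*b - mu*a" unfolding m_def using Lmu by simp
      ultimately show ?thesis unfolding Vf_def by (simp add: algebra_simps max_def)
    qed
    have A1: "F m - F a = g*(m-a) + mu/2*((m-a)^2 - (a-a)^2)"
      by (rule area[OF der am]) (use DV[OF i] Va mb in \<open>auto simp: a_def b_def\<close>)
    have A2: "F b - F m = g*(b-m) + L/2*((b-b)^2 - (m-b)^2)"
      by (rule area[OF der mb]) (use DV[OF i] Vb am in \<open>auto simp: a_def b_def\<close>)
    have "F b - F a = g*(m-a) + mu/2*(m-a)^2 + g*(b-m) - L/2*(b-m)^2"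
      using A1 A2 by (simp add: power2_commute)
    also have "\<dots> = g*d + mu/2*(m-a)^2 - L/2*(b-m)^2"
      by (simp add: d_def algebra_simps)
    also have "\<dots> = g*d + mu/2*(L*d/(L-mu))^2 - L/2*(-mu*d/(L-mu))^2"
      by (simp only: ma bm)
    also have "\<dots> = g*d + L*mu*d^2/(2*(L-mu))"
      using alg1[OF Lmu, of L d] by simp
    also have "\<dots> = g^2/(2*L) * pfun (h i) (mu/L)"
      unfolding pfun_def d using alg2[OF L Lmu] by simp
    finally show ?thesis unfolding a_def b_def .
  qed
  have total: "F 0 - F (p N) = g^2/(2*L) * (\<Sum>i<N. pfun (h i) (mu/L))"
  proof -
    have "F 0 - F (p N) = (\<Sum>i<N. F (p i) - F (p (Suc i)))"
      using sum_lessThan_telescope'[of "\<lambda>i. F (p i)" N] p0 by simp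
    also have "\<dots> = (\<Sum>i<N. g^2/(2*L) * pfun (h i) (mu/L))"
      using step by (intro sum.cong) auto
    finally show ?thesis by (simp add: sum_distrib_left)
  qed
  define xs where "xs = e - g/L"
  have xse: "xs \<le> e" unfolding xs_def using g L by simp
  have DW: "D x = g + L*(x-e)" if "xs \<le> x" "x \<le> e" for x
  proof (rule antisym)
    have "0 \<le> g + L*(x-e)"
    proof -
      have "L*(xs - e) \<le> L*(x-e)" using that L by simp
      moreover have "L*(xs-e) = -g" unfolding xs_def using L by simp
      ultimately show ?thesis by simp
    qed
    then show "D x \<le> g + L*(x-e)" using Dle(2)[of x] by simp
    have "L*(x-e) \<le> 0" using that L by (simp add: mult_nonneg_nonpos)
    moreover have "\<forall>j<N. g \<le> Vf mu L g (p (Suc j)) (p j) x"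
    proof (intro allI impI)
      fix j assume j: "j < N"
      have "x \<le> p (Suc j)" using that pmono[of N "Suc j"] j unfolding e_def by simp
      then show "g \<le> Vf mu L g (p (Suc j)) (p j) x" using Vge j by blast
    qed
    ultimately show "g + L*(x-e) \<le> D x" by (intro Dge) auto
  qed
  have tail: "F e - F xs = g^2/(2*L)"
  proof -
    have "F e - F xs = g*(e-xs) + L/2*((e-e)^2 - (xs-e)^2)"
      by (rule area[OF der xse]) (use DW in auto)
    also have "\<dots> = g^2/(2*L)" unfolding xs_def using L by (simp add: field_simps power2_eq_square)
    finally show ?thesis .
  qed
  have Dnn: "0 \<le> D x" for x
  proof (rule Dge)
    show "0 \<le> g" using g by simp
    show "0 \<le> max 0 (g + L*(x-e))" by simp
    show "\<forall>j<N. 0 \<le> Vf mu L g (p (Suc j)) (p j) x"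
    proof (intro allI impI)
      fix j assume j: "j < N"
      show "0 \<le> Vf mu L g (p (Suc j)) (p j) x"
        by (rule Vf_nonneg[of mu L g "h j"]) (use mu L g hN j pS[of j] in auto)
    qed
  qed
  have Dnp: "D x \<le> 0" if "x \<le> xs" for x
  proof -
    have "L*(x - xs) \<le> 0" using that L by (simp add: mult_nonneg_nonpos)
    moreover have "g + L*(x-e) = L*(x-xs)" unfolding xs_def using L by (simp add: field_simps)
    ultimately show ?thesis using Dle(2)[of x] by simp
  qed
  have minF: "F xs \<le> F y" for y
  proof (cases "xs \<le> y")
    case True
    show ?thesis
      by (rule DERIV_nonneg_imp_nondecreasing[OF True]) (use der Dnn in blast)
  next
    case False
    show ?thesis
      by (rule deriv_nonpos_imp_antimono[of y xs F D]) (use der Dnp False in auto)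
  qed
  have sc: "F \<in> smooth_class mu L"
  proof -
    have n2: "(norm x)^2 = x^2" for x :: real by simp
    have c1: "convex_on UNIV (\<lambda>x. L / 2 * x^2 - F x)"
    proof (rule convex_on_realI[where f'="\<lambda>x. L*x - D x"])
      show "connected (UNIV::real set)" by simp
      fix x :: real
      show "((\<lambda>x. L / 2 * x^2 - F x) has_real_derivative L*x - D x) (at x)"
        by (auto intro!: derivative_eq_intros der)
    next
      fix x y :: real assume "x \<le> y"
      then have "D y - D x \<le> L*(y-x)" using slope unfolding slope_ok_def by blast
      then show "L*x - D x \<le> L*y - D y" by (simp add: algebra_simps)
    qed
    have c2: "convex_on UNIV (\<lambda>x. F x - mu / 2 * x^2)"
    proof (rule convex_on_realI[where f'="\<lambda>x. D x - mu*x"])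
      show "connected (UNIV::real set)" by simp
      fix x :: real
      show "((\<lambda>x. F x - mu / 2 * x^2) has_real_derivative D x - mu*x) (at x)"
        by (auto intro!: derivative_eq_intros der)
    next
      fix x y :: real assume "x \<le> y"
      then have "mu*(y-x) \<le> D y - D x" using slope unfolding slope_ok_def by blast
      then show "D x - mu*x \<le> D y - mu*y" by (simp add: algebra_simps)
    qed
    have "F differentiable (at x)" for x using der real_differentiable_def by blast
    then show ?thesis unfolding smooth_class_def using c1 c2 by (simp add: n2)
  qed
  show ?thesis
  proof (intro exI conjI allI impI)
    show "F \<in> smooth_class mu L" by (rule sc)
    show "deriv F (gd_iter F L h 0 i) = g" if "i \<le> N" for i using iter[OF that] dF Dp[OF that] by simp
    show "F 0 - F (gd_iter F L h 0 N) = g^2/(2*L) * (\<Sum>i<N. pfun (h i) (mu/L))"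
      using iter[of N] total by simp
    show "F xs \<le> F y" for y by (rule minF)
    show "F 0 - F xs = g^2/(2*L) * (1 + (\<Sum>i<N. pfun (h i) (mu/L)))"
      using total tail unfolding e_def by (simp add: algebra_simps)
  qed
qed


lemma pfun_pos:
  assumes "L > 0" "mu \<le> 0" "0 < hh" "hh \<le> 1"
  shows "pfun hh (mu/L) > 0"
proof -
  define k where "k = mu/L"
  have k0: "k \<le> 0" unfolding k_def using assms by (simp add: divide_nonpos_pos)
  have "1 - k > 0" using k0 by simp
  then have c1: "(-k)/(1-k) \<le> 1" using pos_divide_le_eq[of "1-k" "-k" 1] by simp
  have c0: "0 \<le> (-k)/(1-k)" using k0 \<open>1 - k > 0\<close> by (intro divide_nonneg_pos) auto
  have "hh^2 * ((-k)/(1-k)) \<le> hh^2" using mult_left_mono[OF c1, of "hh^2"] by simp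
  moreover have "hh^2 \<le> hh" using assms by (simp add: power2_eq_square mult_left_le)
  ultimately have "hh^2 * (-k)/(1-k) \<le> hh" by simp
  then show ?thesis unfolding pfun_def k_def[symmetric] using assms by linarith
qed

theorem proposition4p3:
  fixes L mu Delta :: real and N :: nat and h :: "nat \<Rightarrow> real"
  assumes "L > 0" and "mu \<le> 0" and "N \<ge> 1"
    and "\<forall>i<N. 0 < h i \<and> h i \<le> 1" and "Delta > 0"
  shows "(\<exists>f x0. f \<in> smooth_class mu L
            \<and> f x0 - f (gd_iter f L h x0 N) = Delta
            \<and> Min ((\<lambda>i. (deriv f (gd_iter f L h x0 i))^2) ` {0..N})
                = 2 * L * Delta / (\<Sum>i<N. pfun (h i) (mu / L)))
       \<and> (\<exists>f x0 xstar. f \<in> smooth_class mu L \<and> (\<forall>y. f xstar \<le> f y)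
            \<and> f x0 - f xstar = Delta
            \<and> Min ((\<lambda>i. (deriv f (gd_iter f L h x0 i))^2) ` {0..N})
                = 2 * L * Delta / (1 + (\<Sum>i<N. pfun (h i) (mu / L))))"
proof -
  define S where "S = (\<Sum>i<N. pfun (h i) (mu / L))"
  have S: "S > 0" unfolding S_def
    using assms by (intro sum_pos) (auto intro!: pfun_pos simp: lessThan_empty_iff)
  have img: "(\<lambda>i. (deriv f (gd_iter f L h 0 i))^2) ` {0..N} = {g^2}"
    if "\<forall>i\<le>N. deriv f (gd_iter f L h 0 i) = g" for f g
    using that by auto
  have part1: "\<exists>f x0. f \<in> smooth_class mu L
            \<and> f x0 - f (gd_iter f L h x0 N) = Delta
            \<and> Min ((\<lambda>i. (deriv f (gd_iter f L h x0 i))^2) ` {0..N}) = 2 * L * Delta / S"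
  proof -
    define g where "g = sqrt (2*L*Delta/S)"
    have g2: "g^2 = 2*L*Delta/S" unfolding g_def using assms S by simp
    have g: "g > 0" unfolding g_def using assms S by simp
    obtain F xs where F: "F \<in> smooth_class mu L" "\<forall>i\<le>N. deriv F (gd_iter F L h 0 i) = g"
      "F 0 - F (gd_iter F L h 0 N) = g^2/(2*L) * S"
      using construction[OF assms(1,2,4) g] unfolding S_def by blast
    have "F 0 - F (gd_iter F L h 0 N) = Delta" using F(3) g2 S assms by simp
    moreover have "Min ((\<lambda>i. (deriv F (gd_iter F L h 0 i))^2) ` {0..N}) = 2 * L * Delta / S"
      using img[OF F(2)] g2 by simp
    ultimately show ?thesis using F(1) by blast
  qed
  have part2: "\<exists>f x0 xstar. f \<in> smooth_class mu L \<and> (\<forall>y. f xstar \<le> f y)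
            \<and> f x0 - f xstar = Delta
            \<and> Min ((\<lambda>i. (deriv f (gd_iter f L h x0 i))^2) ` {0..N}) = 2 * L * Delta / (1 + S)"
  proof -
    define g where "g = sqrt (2*L*Delta/(1+S))"
    have g2: "g^2 = 2*L*Delta/(1+S)" unfolding g_def using assms S by simp
    have g: "g > 0" unfolding g_def using assms S by simp
    obtain F xs where F: "F \<in> smooth_class mu L" "\<forall>i\<le>N. deriv F (gd_iter F L h 0 i) = g"
      "\<forall>y. F xs \<le> F y" "F 0 - F xs = g^2/(2*L) * (1 + S)"
      using construction[OF assms(1,2,4) g] unfolding S_def by blast
    have "F 0 - F xs = Delta" using F(4) g2 S assms by simp
    moreover have "Min ((\<lambda>i. (deriv F (gd_iter F L h 0 i))^2) ` {0..N}) = 2 * L * Delta / (1 + S)"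
      using img[OF F(2)] g2 by simp
    ultimately show ?thesis using F(1,3) by blast
  qed
  show ?thesis using part1 part2 unfolding S_def by blast
qed

end
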